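(* Let $\mathcal{A}$ be a unital $\mathbb{F}$-algebra of dimension $n\ge2$ and let $S$ be a generating set of $\mathcal{A}$ with $l(S)\ge2$. Let $M=(m_0,\ldots,m_{n-1})$ be the characteristic sequence of $S$, and let $k_1$ be the index with $m_{k_1}=1$ and $m_{k_1+1}>1$. Then there exist a basis $\{e_0,\ldots,e_{n-1}\}$ of $\mathcal{A}$ and functions $t_1,t_2:\{k_1+1,\ldots,n-1\}\to\{1,\ldots,n-1\}$ such that: (1) for every $i\in\{0,\ldots,n-1\}$, $e_i$ is a word in $S$ of length $m_i$; (2a) for every $k$ with $k_1<k<n$, $m_{t_1(k)}+m_{t_2(k)}=m_k$ and $t_1(k),t_2(k)<k$; (2b) for all $h_1,h_2$ with $k_1<h_1<h_2<n$, at least one of $t_1(h_1)<t_1(h_2)$ or $t_2(h_1)<t_2(h_2)$ holds; (3) for every $k$ with $k_1<k<n$, $e_{t_1(k)}e_{t_2(k)}=e_k$; (4) $L_1(S)=\langle e_0,\ldots,e_{k_1}\rangle$.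
   Context: Algebras are finite-dimensional, unital, not necessarily associative, over a field $\mathbb{F}$. For a finite generating set $S$ of $\mathcal{A}$, a word in $S$ is any product (with any bracketing) of finitely many elements of $S$; its length is the number of factors, and $1$ is a word of length $0$. $L_i(S)$ is the linear span of all words in $S$ of length at most $i$ (so $L_0(S)=\mathbb{F}$); $l(S)=\min\{k\ge0: L_k(S)=\mathcal{A}\}$. The characteristic sequence of $S$ is the non-decreasing sequence $(m_0,\ldots,m_{n-1})$ constructed as follows: $m_0=0$; with $s_1=\dim L_1(S)-1$, set $m_1=\cdots=m_{s_1}=1$; inductively, if $m_1,\ldots,m_r$ are defined using $L_1(S),\ldots,L_{k-1}(S)$, put $s_k=\dim L_k(S)-\dim L_{k-1}(S)$ and set $m_{r+1}=\cdots=m_{r+s_k}=k$. (The sequence has $n=\dim\mathcal{A}$ terms.) $\langle\cdot\rangle$ denotes linear span. *)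

theory Defs
  imports Complex_Main
begin

text \<open>A unital, not necessarily associative, algebra over a field 'k, carried by the
  type 'v: scalar multiplication smult, bilinear product mul, unit one.\<close>

definition unital_algebra ::
  "('k::field \<Rightarrow> 'v::ab_group_add \<Rightarrow> 'v) \<Rightarrow> ('v \<Rightarrow> 'v \<Rightarrow> 'v) \<Rightarrow> 'v \<Rightarrow> bool" where
  "unital_algebra smult mul one \<longleftrightarrow>
     Vector_Spaces.vector_space smult \<and>
     (\<forall>x y z. mul (x + y) z = mul x z + mul y z) \<and>
     (\<forall>x y z. mul x (y + z) = mul x y + mul x z) \<and>
     (\<forall>a x y. mul (smult a x) y = smult a (mul x y)) \<and>
     (\<forall>a x y. mul x (smult a y) = smult a (mul x y)) \<and>
     (\<forall>x. mul one x = x \<and> mul x one = x)"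

definition fin_dim :: "('k::field \<Rightarrow> 'v::ab_group_add \<Rightarrow> 'v) \<Rightarrow> bool" where
  "fin_dim smult \<longleftrightarrow> (\<exists>B. finite B \<and> Modules.module.span smult B = UNIV)"

inductive word :: "('v \<Rightarrow> 'v \<Rightarrow> 'v) \<Rightarrow> 'v \<Rightarrow> 'v set \<Rightarrow> 'v \<Rightarrow> nat \<Rightarrow> bool"
  for mul one S where
  word_one: "word mul one S one 0"
| word_gen: "s \<in> S \<Longrightarrow> word mul one S s 1"
| word_mul: "word mul one S u i \<Longrightarrow> word mul one S v j \<Longrightarrow> word mul one S (mul u v) (i + j)"

definition Lspan ::
  "('k::field \<Rightarrow> 'v::ab_group_add \<Rightarrow> 'v) \<Rightarrow> ('v \<Rightarrow> 'v \<Rightarrow> 'v) \<Rightarrow> 'v \<Rightarrow> 'v set \<Rightarrow> nat \<Rightarrow> 'v set" where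
  "Lspan smult mul one S i = Modules.module.span smult {w. \<exists>j\<le>i. word mul one S w j}"

definition generates ::
  "('k::field \<Rightarrow> 'v::ab_group_add \<Rightarrow> 'v) \<Rightarrow> ('v \<Rightarrow> 'v \<Rightarrow> 'v) \<Rightarrow> 'v \<Rightarrow> 'v set \<Rightarrow> bool" where
  "generates smult mul one S \<longleftrightarrow> (\<exists>k. Lspan smult mul one S k = UNIV)"

definition gen_length ::
  "('k::field \<Rightarrow> 'v::ab_group_add \<Rightarrow> 'v) \<Rightarrow> ('v \<Rightarrow> 'v \<Rightarrow> 'v) \<Rightarrow> 'v \<Rightarrow> 'v set \<Rightarrow> nat" where
  "gen_length smult mul one S = (LEAST k. Lspan smult mul one S k = UNIV)"

text \<open>Characteristic sequence: m_i = k exactly when dim L_{k-1} \<le> i < dim L_k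
  (with m_0 = 0), i.e. m_i is the least k with i < dim L_k(S).\<close>
definition char_seq ::
  "('k::field \<Rightarrow> 'v::ab_group_add \<Rightarrow> 'v) \<Rightarrow> ('v \<Rightarrow> 'v \<Rightarrow> 'v) \<Rightarrow> 'v \<Rightarrow> 'v set \<Rightarrow> nat \<Rightarrow> nat" where
  "char_seq smult mul one S i = (LEAST k. i < Vector_Spaces.vector_space.dim smult (Lspan smult mul one S k))"

end

theory Submission
  imports Defs "HOL-Library.Product_Lexorder"
begin

locale alg5 = vector_space smult for smult :: "'k::field \<Rightarrow> 'v::ab_group_add \<Rightarrow> 'v" +
  fixes mul :: "'v \<Rightarrow> 'v \<Rightarrow> 'v" and one :: 'v and S :: "'v set"
  assumes addL: "mul (x + y) z = mul x z + mul y z"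
    and addR: "mul x (y + z) = mul x y + mul x z"
    and smL: "mul (smult a x) y = smult a (mul x y)"
    and smR: "mul x (smult a y) = smult a (mul x y)"
    and oneL: "mul one x = x" and oneR: "mul x one = x"
    and one_nz: "one \<noteq> 0" and finS: "finite S"
begin

fun greedy :: "('a \<Rightarrow> 'v) \<Rightarrow> 'v set \<Rightarrow> 'a list \<Rightarrow> 'a list" where
  "greedy f B [] = []"
| "greedy f B (x # xs) = (if f x \<in> span B then greedy f B xs else x # greedy f (insert (f x) B) xs)"

lemma greedy_subset: "set (greedy f B xs) \<subseteq> set xs"
  by (induction xs arbitrary: B) auto

lemma greedy_sorted: "sorted_wrt R xs \<Longrightarrow> sorted_wrt R (greedy f B xs)"
proof (induction xs arbitrary: B)
  case (Cons x xs)
  then show ?case using greedy_subset[of f "insert (f x) B" xs] by auto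
qed simp

lemma greedy_props:
  "independent B \<Longrightarrow> independent (B \<union> f ` set (greedy f B xs)) \<and> distinct (map f (greedy f B xs))
    \<and> f ` set (greedy f B xs) \<inter> B = {} \<and> span (B \<union> f ` set (greedy f B xs)) = span (B \<union> f ` set xs)"
proof (induction xs arbitrary: B)
  case Nil
  then show ?case by simp
next
  case (Cons x xs)
  show ?case
  proof (cases "f x \<in> span B")
    case True
    have "span (B \<union> f ` set (x # xs)) = span (B \<union> f ` set xs)"
    proof -
      have "f x \<in> span (B \<union> f ` set xs)" using True span_mono[of B "B \<union> f ` set xs"] by auto
      then show ?thesis using span_redundant[of "f x" "B \<union> f ` set xs"] by simp
    qed
    then show ?thesis using Cons.IH[OF Cons.prems] True by simp
  next
    case False
    have ind: "independent (insert (f x) B)" using False Cons.prems independent_insertI by blast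
    note IH = Cons.IH[OF ind]
    have nB: "f x \<notin> B" using False span_base by blast
    show ?thesis using IH False nB by auto
  qed
qed


lemma mul0L[simp]: "mul 0 y = 0"
proof -
  have "mul (0 + 0) y = mul 0 y + mul 0 y" by (rule addL)
  then show ?thesis by simp
qed

lemma mul0R[simp]: "mul y 0 = 0"
proof -
  have "mul y (0 + 0) = mul y 0 + mul y 0" by (rule addR)
  then show ?thesis by simp
qed

lemma mul_span:
  assumes x: "x \<in> span A" and y: "y \<in> span B"
  shows "mul x y \<in> span {mul a b | a b. a \<in> A \<and> b \<in> B}"
proof -
  let ?P = "{mul a b | a b. a \<in> A \<and> b \<in> B}"
  have inner: "mul a y \<in> span ?P" if a: "a \<in> A" and y: "y \<in> span B" for a y
    using y
  proof (induction rule: span_induct)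
    case base
    show ?case unfolding subspace_def
      by (auto simp: addR smR intro: span_add span_scale span_zero)
  next
    case (step x)
    then show ?case using a by (auto intro!: span_base)
  qed
  show ?thesis using x
  proof (induction rule: span_induct)
    case base
    show ?case unfolding subspace_def
      by (auto simp: addL smL intro: span_add span_scale span_zero)
  next
    case (step x)
    then show ?case using inner y by blast
  qed
qed

abbreviation W where "W w j \<equiv> word mul one S w j"
abbreviation L where "L i \<equiv> Lspan smult mul one S i"
abbreviation m where "m i \<equiv> char_seq smult mul one S i"

lemma L_def: "L i = span {w. \<exists>j\<le>i. W w j}"
  unfolding Lspan_def by simp

lemma m_def: "m i = (LEAST k. i < dim (L k))"
  unfolding char_seq_def by simp

lemma word01: "W w j \<Longrightarrow> (j = 0 \<longrightarrow> w = one) \<and> (j = 1 \<longrightarrow> w \<in> S)"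
proof (induction rule: word.induct)
  case (word_mul u i v j)
  show ?case
  proof (intro conjI impI)
    assume "i + j = 0" then show "mul u v = one" using word_mul.IH oneL by simp
  next
    assume "i + j = 1"
    then have "(i = 0 \<and> j = 1) \<or> (i = 1 \<and> j = 0)" by arith
    then show "mul u v \<in> S" using word_mul.IH oneL oneR by auto
  qed
qed auto

lemma word0: "W w 0 \<Longrightarrow> w = one" using word01 by blast

lemma words0: "{w. \<exists>j\<le>0. W w j} = {one}"
  using word0 word.word_one by auto

lemma words1: "{w. \<exists>j\<le>1. W w j} = insert one S"
proof -
  have "W w j \<Longrightarrow> j \<le> 1 \<Longrightarrow> w \<in> insert one S" for w j
    using word01[of w j] by (cases j) auto
  moreover have "w \<in> insert one S \<Longrightarrow> \<exists>j\<le>1. W w j" for w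
    using word.word_one[of mul one S] word.word_gen[of w S mul one] by (metis insert_iff le_refl zero_le)
  ultimately show ?thesis by blast
qed

lemma word_L: "W w j \<Longrightarrow> j \<le> i \<Longrightarrow> w \<in> L i"
  unfolding L_def by (auto intro!: span_base)

lemma L_mono: "i \<le> j \<Longrightarrow> L i \<subseteq> L j"
  unfolding L_def by (rule span_mono) (auto intro: le_trans)

definition sl where "sl = (SOME xs. set xs = S)"

lemma set_sl: "set sl = S"
proof -
  obtain xs where "set xs = S" using finS finite_list by blast
  then show ?thesis unfolding sl_def by (rule someI)
qed

definition cand :: "nat \<Rightarrow> nat \<Rightarrow> (nat \<times> nat) set" where
  "cand K N = {(a,b). a < N \<and> b < N \<and> 0 < m a \<and> 0 < m b \<and> m a + m b = K}"

lemma finite_cand: "finite (cand K N)"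
proof -
  have "cand K N \<subseteq> {..<N} \<times> {..<N}" unfolding cand_def by auto
  then show ?thesis by (rule finite_subset) auto
qed

definition fP :: "('v \<times> nat \<times> nat) list \<Rightarrow> nat \<times> nat \<Rightarrow> 'v" where
  "fP P p = mul (fst (P ! fst p)) (fst (P ! snd p))"

definition GL :: "nat \<Rightarrow> ('v \<times> nat \<times> nat) list \<Rightarrow> (nat \<times> nat) list" where
  "GL K P = greedy (fP P) (set (map fst P)) (sorted_list_of_set (cand K (length P)))"

fun Es :: "nat \<Rightarrow> ('v \<times> nat \<times> nat) list" where
  "Es 0 = [(one,0,0)]"
| "Es (Suc 0) = [(one,0,0)] @ map (\<lambda>s. (s,0,0)) (greedy id {one} sl)"
| "Es (Suc (Suc k)) = Es (Suc k) @ map (\<lambda>p. (fP (Es (Suc k)) p, p)) (GL (Suc (Suc k)) (Es (Suc k)))"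

lemma Es_Suc: "\<exists>zs. Es (Suc k) = Es k @ zs"
  by (cases k) auto

lemma Es_prefix: "j \<le> k \<Longrightarrow> \<exists>zs. Es k = Es j @ zs"
proof (induction k rule: dec_induct)
  case base then show ?case by simp
next
  case (step k)
  then show ?case using Es_Suc[of k] by fastforce
qed

lemma len_mono: "j \<le> k \<Longrightarrow> length (Es j) \<le> length (Es k)"
  using Es_prefix[of j k] by auto

lemma nth_mono: "j \<le> k \<Longrightarrow> i < length (Es j) \<Longrightarrow> Es k ! i = Es j ! i"
  using Es_prefix[of j k] by (auto simp: nth_append)

abbreviation D where "D K \<equiv> \<forall>j\<le>K. dim (L j) = length (Es j)"

lemma m_level:
  assumes "D K" "1 \<le> K" "length (Es (K-1)) \<le> i" "i < length (Es K)"
  shows "m i = K"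
  unfolding m_def
proof (rule Least_equality)
  show "i < dim (L K)" using assms by simp
  fix k assume "i < dim (L k)"
  show "K \<le> k"
  proof (rule ccontr)
    assume "\<not> K \<le> k"
    then have "k \<le> K - 1" by simp
    then have "length (Es k) \<le> length (Es (K-1))" by (rule len_mono)
    moreover have "dim (L k) = length (Es k)" using assms \<open>\<not> K \<le> k\<close> by simp
    ultimately show False using assms \<open>i < dim (L k)\<close> by simp
  qed
qed

lemma m_zero:
  assumes "D 0" shows "m 0 = 0"
  unfolding m_def using assms by (intro Least_equality) auto

lemma m_le_iff:
  assumes "D K" "i < length (Es K)" "j \<le> K"
  shows "m i \<le> j \<longleftrightarrow> i < length (Es j)"
proof
  assume "i < length (Es j)"
  then have "i < dim (L j)" using assms by simp
  then show "m i \<le> j" unfolding m_def by (rule Least_le)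
next
  assume a: "m i \<le> j"
  have "i < dim (L K)" using assms by simp
  then have "i < dim (L (m i))" unfolding m_def by (rule LeastI)
  moreover have "dim (L (m i)) = length (Es (m i))" using assms a by simp
  moreover have "length (Es (m i)) \<le> length (Es j)" using a by (rule len_mono)
  ultimately show "i < length (Es j)" by simp
qed


lemma key:
  assumes K2: "2 \<le> K"
    and Li: "\<And>i. 1 \<le> i \<Longrightarrow> i < K \<Longrightarrow> L i = span (E ` {a. a < N \<and> m a \<le> i})"
    and wE: "\<And>a. a < N \<Longrightarrow> W (E a) (m a)"
  shows "L K = span (L (K-1) \<union> (\<lambda>p. mul (E (fst p)) (E (snd p))) ` cand K N)"
proof -
  let ?P = "(\<lambda>p. mul (E (fst p)) (E (snd p))) ` cand K N"
  let ?T = "span (L (K-1) \<union> ?P)"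
  have LT: "L (K-1) \<subseteq> ?T" using span_superset[of "L (K-1) \<union> ?P"] by (rule subset_trans[rotated]) simp
  have PT: "?P \<subseteq> ?T" using span_superset[of "L (K-1) \<union> ?P"] by (rule subset_trans[rotated]) simp
  have WL: "W w j \<Longrightarrow> j \<le> K - 1 \<Longrightarrow> w \<in> ?T" for w j using word_L[of w j "K-1"] LT by (rule subsetD[rotated])
  have claim: "W w j \<Longrightarrow> j \<le> K \<Longrightarrow> w \<in> ?T" for w j
  proof (induction rule: word.induct)
    case word_one
    show ?case using WL[OF word.word_one[of mul one S]] by simp
  next
    case (word_gen s)
    show ?case using WL[OF word.word_gen[OF word_gen(1)]] K2 by simp
  next
    case (word_mul u i v j)
    show ?case
    proof (cases "i = 0")
      case True
      then have "u = one" using word_mul(1) word0 by simp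
      then show ?thesis using word_mul True oneL by simp
    next
      case i0: False
      show ?thesis
      proof (cases "j = 0")
        case True
        then have "v = one" using word_mul(2) word0 by simp
        then show ?thesis using word_mul True oneR by simp
      next
        case j0: False
        show ?thesis
        proof (cases "i + j < K")
          case True
          then show ?thesis using WL word.word_mul[OF word_mul(1,2)] by simp
        next
          case False
          then have ij: "i + j = K" using word_mul by simp
          have u: "u \<in> span (E ` {a. a < N \<and> m a \<le> i})"
            using Li[of i] word_L[OF word_mul(1), of i] i0 j0 ij by simp
          have v: "v \<in> span (E ` {a. a < N \<and> m a \<le> j})"
            using Li[of j] word_L[OF word_mul(2), of j] i0 j0 ij by simp
          have sub: "{mul x y | x y. x \<in> E ` {a. a < N \<and> m a \<le> i} \<and> y \<in> E ` {a. a < N \<and> m a \<le> j}} \<subseteq> ?T"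
          proof clarify
            fix a b assume a: "a < N" "m a \<le> i" and b: "b < N" "m b \<le> j"
            show "mul (E a) (E b) \<in> ?T"
            proof (cases "m a = 0")
              case True
              then have "E a = one" using wE[OF a(1)] word0 by simp
              then show ?thesis using WL[OF wE[OF b(1)]] b ij i0 oneL by simp
            next
              case ma: False
              show ?thesis
              proof (cases "m b = 0")
                case True
                then have "E b = one" using wE[OF b(1)] word0 by simp
                then show ?thesis using WL[OF wE[OF a(1)]] a ij j0 oneR by simp
              next
                case mb: False
                have w: "W (mul (E a) (E b)) (m a + m b)" using word.word_mul[OF wE[OF a(1)] wE[OF b(1)]] .
                show ?thesis
                proof (cases "m a + m b < K")
                  case True then show ?thesis using WL[OF w] by simp
                next
                  case False
                  then have "(a, b) \<in> cand K N" unfolding cand_def using a b ij ma mb by auto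
                  then have "mul (E a) (E b) \<in> ?P" by (rule rev_image_eqI) simp
                  then show ?thesis using PT by (rule subsetD[rotated])
                qed
              qed
            qed
          qed
          have "mul u v \<in> span {mul x y | x y. x \<in> E ` {a. a < N \<and> m a \<le> i} \<and> y \<in> E ` {a. a < N \<and> m a \<le> j}}"
            by (rule mul_span[OF u v])
          then show ?thesis using span_minimal[OF sub subspace_span] by blast
        qed
      qed
    qed
  qed
  show ?thesis
  proof
    show "L K \<subseteq> ?T" unfolding L_def[of K]
      by (rule span_minimal) (use claim in auto)
  next
    have "L (K-1) \<subseteq> L K" by (rule L_mono) simp
    moreover have "?P \<subseteq> L K"
    proof clarify
      fix a b assume "(a, b) \<in> cand K N"
      then have "a < N" "b < N" "m a + m b = K" unfolding cand_def by auto
      then have "W (mul (E a) (E b)) K" using word.word_mul[OF wE wE, of a b] by simp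
      then show "mul (E (fst (a, b))) (E (snd (a, b))) \<in> L K" using word_L by simp
    qed
    ultimately show "?T \<subseteq> L K" unfolding L_def[of K] by (intro span_minimal) auto
  qed
qed

definition Inv where
  "Inv k \<longleftrightarrow> distinct (map fst (Es k)) \<and> independent (set (map fst (Es k))) \<and>
     span (set (map fst (Es k))) = L k \<and> (\<forall>i<length (Es k). W (fst (Es k ! i)) (m i))"

lemma dim_Es:
  assumes "distinct (map fst (Es k))" "independent (set (map fst (Es k)))" "span (set (map fst (Es k))) = L k"
  shows "dim (L k) = length (Es k)"
proof -
  have "dim (L k) = dim (span (set (map fst (Es k))))" using assms(3) by simp
  also have "\<dots> = card (set (map fst (Es k)))" using assms(2) by (rule dim_span_eq_card_independent)
  also have "\<dots> = length (Es k)" using assms(1) distinct_card by fastforce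
  finally show ?thesis .
qed

lemma Inv_dim: "Inv k \<Longrightarrow> dim (L k) = length (Es k)"
  unfolding Inv_def using dim_Es by blast

lemma span_Un_span: "span (span A \<union> X) = span (A \<union> X)"
proof -
  have "span A \<union> X \<subseteq> span (A \<union> X)" using span_mono[of A "A \<union> X"] span_superset[of "A \<union> X"] by blast
  moreover have "A \<union> X \<subseteq> span (span A \<union> X)" using span_superset[of A] span_superset[of "span A \<union> X"] by blast
  ultimately show ?thesis unfolding span_eq by blast
qed

lemma L0: "L 0 = span {one}" unfolding L_def words0 ..
lemma L1: "L 1 = span (insert one S)" unfolding L_def words1 ..
lemma L1': "L (Suc 0) = span (insert one S)" using L1 by simp

lemma Inv0: "Inv 0"
proof -
  have a: "distinct (map fst (Es 0))" "independent (set (map fst (Es 0)))" "span (set (map fst (Es 0))) = L 0"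
    using one_nz by (auto simp: L0)
  then have "D 0" using dim_Es by auto
  then have "m 0 = 0" by (rule m_zero)
  then show ?thesis using a unfolding Inv_def by (auto intro: word.word_one)
qed

lemma Inv1: "Inv 1"
proof -
  define g where "g = greedy id {one} sl"
  have gp: "independent ({one} \<union> id ` set g) \<and> distinct (map id g) \<and> id ` set g \<inter> {one} = {}
      \<and> span ({one} \<union> id ` set g) = span ({one} \<union> id ` set sl)"
    unfolding g_def by (rule greedy_props) (use one_nz in simp)
  have e: "map fst (Es 1) = one # g" unfolding g_def by (simp add: comp_def)
  have a: "distinct (map fst (Es 1))" "independent (set (map fst (Es 1)))" "span (set (map fst (Es 1))) = L 1"
    using gp unfolding e by (auto simp: L1' set_sl)
  have "D 1" using dim_Es[OF a] Inv_dim[OF Inv0] by (auto simp: le_Suc_eq)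
  have w: "W (fst (Es 1 ! i)) (m i)" if i: "i < length (Es 1)" for i
  proof (cases i)
    case 0
    then show ?thesis using m_zero \<open>D 1\<close> by (simp add: word.word_one)
  next
    case (Suc i')
    have "m i = 1" using m_level[OF \<open>D 1\<close>] i Suc by simp
    moreover have "fst (Es 1 ! i) = g ! i'" using e i Suc
      by (metis length_map nth_Cons_Suc nth_map)
    moreover have "g ! i' \<in> S" using i Suc e greedy_subset[of id "{one}" sl] set_sl unfolding g_def
      by (metis Suc_less_eq length_Cons length_map nth_mem subsetD)
    ultimately show ?thesis using word.word_gen[of "g ! i'" S mul one] by simp
  qed
  show ?thesis unfolding Inv_def using a w by blast
qed

lemma set_Es_eq:
  assumes "D K" "i \<le> K"
  shows "set (map fst (Es i)) = (\<lambda>a. fst (Es K ! a)) ` {a. a < length (Es K) \<and> m a \<le> i}"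
proof -
  have "{a. a < length (Es K) \<and> m a \<le> i} = {..<length (Es i)}"
    using m_le_iff[OF assms(1) _ assms(2)] len_mono[OF assms(2)] by auto
  moreover have "set (map fst (Es i)) = (\<lambda>a. fst (Es i ! a)) ` {..<length (Es i)}"
  proof -
    have "set (Es i) = (\<lambda>a. Es i ! a) ` {..<length (Es i)}" unfolding set_conv_nth by blast
    then show ?thesis by (simp add: image_image)
  qed
  moreover have "(\<lambda>a. fst (Es i ! a)) ` {..<length (Es i)} = (\<lambda>a. fst (Es K ! a)) ` {..<length (Es i)}"
    using nth_mono[OF assms(2)] by (intro image_cong) auto
  ultimately show ?thesis by simp
qed

lemma EsSS: "Es (Suc (Suc k)) = Es (Suc k) @ map (\<lambda>p. (fP (Es (Suc k)) p, p)) (GL (Suc (Suc k)) (Es (Suc k)))"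
  by simp

lemma InvSS:
  assumes IH: "\<And>j. j < Suc (Suc k) \<Longrightarrow> Inv j"
  shows "Inv (Suc (Suc k))"
proof -
  define K where "K = Suc (Suc k)"
  define P where "P = Es (Suc k)"
  define N where "N = length P"
  define E where "E = (\<lambda>a. fst (P ! a))"
  define C where "C = sorted_list_of_set (cand K N)"
  define G where "G = GL K P"
  have G_def': "G = greedy (fP P) (set (map fst P)) C" unfolding G_def GL_def C_def N_def ..
  have EsK: "Es K = P @ map (\<lambda>p. (fP P p, p)) G" unfolding K_def P_def G_def by simp
  have mapK: "map fst (Es K) = map fst P @ map (fP P) G" unfolding EsK by (simp add: comp_def)
  have IP: "Inv (Suc k)" using IH by simp
  then have IP': "distinct (map fst P)" "independent (set (map fst P))" "span (set (map fst P)) = L (K-1)"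
     "\<And>i. i < N \<Longrightarrow> W (E i) (m i)"
    unfolding Inv_def P_def K_def N_def E_def by auto
  have setC: "set C = cand K N" unfolding C_def using finite_cand by simp
  have gp: "independent (set (map fst P) \<union> fP P ` set G) \<and> distinct (map (fP P) G) \<and> fP P ` set G \<inter> set (map fst P) = {}
      \<and> span (set (map fst P) \<union> fP P ` set G) = span (set (map fst P) \<union> fP P ` set C)"
    unfolding G_def' by (rule greedy_props) (rule IP'(2))
  have DP: "D (Suc k)"
  proof (intro allI impI)
    fix j assume "j \<le> Suc k"
    then have "j < Suc (Suc k)" by simp
    then show "dim (L j) = length (Es j)" using IH Inv_dim by blast
  qed
  have fPE: "fP P = (\<lambda>p. mul (E (fst p)) (E (snd p)))" unfolding fP_def E_def by (rule ext) simp
  have keyK: "L K = span (L (K-1) \<union> (\<lambda>p. mul (E (fst p)) (E (snd p))) ` cand K N)"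
  proof (rule key)
    show "2 \<le> K" unfolding K_def by simp
  next
    fix i assume i: "1 \<le> i" "i < K"
    have "L i = span (set (map fst (Es i)))" using IH[of i] i unfolding Inv_def K_def by simp
    also have "set (map fst (Es i)) = E ` {a. a < N \<and> m a \<le> i}"
      unfolding E_def N_def P_def by (rule set_Es_eq[OF DP]) (use i K_def in simp)
    finally show "L i = span (E ` {a. a < N \<and> m a \<le> i})" .
  next
    fix a assume "a < N" then show "W (E a) (m a)" by (rule IP'(4))
  qed
  have a1: "distinct (map fst (Es K))"
  proof -
    have "set (map fst P) \<inter> set (map (fP P) G) = {}" using gp by (simp add: Int_commute)
    then show ?thesis unfolding mapK distinct_append using IP'(1) gp by simp
  qed
  have a2: "independent (set (map fst (Es K)))" using gp unfolding mapK by (simp add: Un_commute)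
  have a3: "span (set (map fst (Es K))) = L K"
  proof -
    have "span (set (map fst (Es K))) = span (set (map fst P) \<union> fP P ` set C)"
      using gp unfolding mapK by simp
    also have "\<dots> = span (span (set (map fst P)) \<union> fP P ` set C)" by (rule span_Un_span[symmetric])
    also have "\<dots> = L K" using keyK IP'(3) setC fPE by simp
    finally show ?thesis .
  qed
  have DK: "D K"
  proof (intro allI impI)
    fix j assume "j \<le> K"
    then have "j \<le> Suc k \<or> j = K" unfolding K_def by auto
    then show "dim (L j) = length (Es j)" using DP dim_Es[OF a1 a2 a3] by blast
  qed
  have w: "W (fst (Es K ! i)) (m i)" if i: "i < length (Es K)" for i
  proof (cases "i < N")
    case True
    have "Es K ! i = P ! i" unfolding EsK using True by (simp add: nth_append N_def)
    then show ?thesis using IP'(4)[OF True] by (simp add: E_def)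
  next
    case False
    define p where "p = G ! (i - N)"
    have lenK: "length (Es K) = N + length G" unfolding EsK N_def by simp
    have iN: "i - N < length G" using i False lenK by linarith
    have Ki: "Es K ! i = (fP P p, p)" unfolding EsK p_def using False iN by (simp add: nth_append N_def)
    have "p \<in> set G" unfolding p_def using iN by (rule nth_mem)
    then have "p \<in> set C" using greedy_subset[of "fP P" "set (map fst P)" C] unfolding G_def' by blast
    then have "p \<in> cand K N" using setC by simp
    then have pc: "fst p < N" "snd p < N" "m (fst p) + m (snd p) = K" unfolding cand_def by (cases p, simp)+
    have l1: "length (Es (K-1)) \<le> i" using False unfolding N_def P_def K_def by simp
    have mi: "m i = K" using m_level[OF DK _ l1 i] unfolding K_def by simp
    have "W (mul (E (fst p)) (E (snd p))) (m (fst p) + m (snd p))"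
      using word.word_mul[OF IP'(4)[OF pc(1)] IP'(4)[OF pc(2)]] .
    then have "W (fP P p) K" using pc(3) fPE by simp
    then show ?thesis using Ki mi by simp
  qed
  show ?thesis using a1 a2 a3 w unfolding Inv_def K_def by blast
qed

lemma Inv_all: "Inv K"
proof (induction K rule: less_induct)
  case (less K)
  show ?case
  proof (cases K)
    case 0 then show ?thesis using Inv0 by simp
  next
    case (Suc k)
    then show ?thesis
    proof (cases k)
      case 0 then show ?thesis using Inv1 Suc by simp
    next
      case (Suc k')
      then show ?thesis using InvSS[of k'] less \<open>K = Suc k\<close> by simp
    qed
  qed
qed

lemma D_all: "D K" using Inv_all Inv_dim by blast

lemma m_le_iff':
  assumes "i < length (Es l)"
  shows "m i \<le> j \<longleftrightarrow> i < length (Es j)"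
proof -
  have "i < length (Es (max l j))" using assms len_mono[of l "max l j"] by simp
  then show ?thesis using m_le_iff[OF D_all, of i "max l j" j] by simp
qed

lemma m_mono:
  assumes "i \<le> j" "j < length (Es l)"
  shows "m i \<le> m j"
proof -
  have "j < length (Es (m j))" using m_le_iff'[OF assms(2), of "m j"] by simp
  then have "i < length (Es (m j))" using assms(1) by simp
  then show ?thesis using m_le_iff'[of i "m j" "m j"] by simp
qed

lemma tag_props:
  assumes k: "length (Es 1) \<le> k" "k < length (Es l)"
  defines "a \<equiv> fst (snd (Es l ! k))" and "b \<equiv> snd (snd (Es l ! k))"
  shows "m a + m b = m k \<and> a < length (Es (m k - 1)) \<and> b < length (Es (m k - 1))
    \<and> length (Es (m k - 1)) \<le> k \<and> k < length (Es (m k)) \<and> 0 < m a \<and> 0 < m b \<and> 2 \<le> m k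
    \<and> fst (Es l ! k) = mul (fst (Es l ! a)) (fst (Es l ! b))
    \<and> snd (Es l ! k) = GL (m k) (Es (m k - 1)) ! (k - length (Es (m k - 1)))
    \<and> k - length (Es (m k - 1)) < length (GL (m k) (Es (m k - 1)))"
proof -
  define K where "K = m k"
  have Kl: "K \<le> l" unfolding K_def using m_le_iff'[OF k(2), of l] k(2) by simp
  have K2: "2 \<le> K"
  proof (rule ccontr)
    assume "\<not> 2 \<le> K"
    then have "m k \<le> 1" unfolding K_def by simp
    then have "k < length (Es 1)" using m_le_iff'[OF k(2)] by simp
    then show False using k(1) by simp
  qed
  then obtain k' where K': "K = Suc (Suc k')" by (metis add_2_eq_Suc le_Suc_ex)
  define P where "P = Es (Suc k')"
  define N where "N = length P"
  define G where "G = GL K P"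
  have NK: "N \<le> k"
  proof -
    have "\<not> m k \<le> Suc k'" using K' unfolding K_def by simp
    then show ?thesis using m_le_iff'[OF k(2)] unfolding N_def P_def by simp
  qed
  have kK: "k < length (Es K)" using m_le_iff'[OF k(2), of K] unfolding K_def by simp
  have EsK: "Es K = P @ map (\<lambda>p. (fP P p, p)) G" unfolding K' P_def G_def by simp
  have lk: "Es l ! k = Es K ! k" using nth_mono[OF Kl kK] .
  have lenK: "length (Es K) = N + length G" unfolding EsK N_def by simp
  have iN: "k - N < length G" using kK NK lenK by linarith
  define p where "p = G ! (k - N)"
  have Ki: "Es l ! k = (fP P p, p)" unfolding lk EsK p_def using NK iN by (simp add: nth_append N_def)
  have "p \<in> set G" unfolding p_def using iN by (rule nth_mem)
  then have "p \<in> set (sorted_list_of_set (cand K N))"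
    using greedy_subset[of "fP P" "set (map fst P)" "sorted_list_of_set (cand K N)"] unfolding G_def GL_def N_def by (rule subsetD[rotated])
  then have "p \<in> cand K N" using finite_cand by simp
  then have pc: "fst p < N" "snd p < N" "m (fst p) + m (snd p) = K" "0 < m (fst p)" "0 < m (snd p)"
    unfolding cand_def by (cases p, simp)+
  have ab: "a = fst p" "b = snd p" unfolding a_def b_def Ki by simp_all
  have Pl: "Suc k' \<le> l" using Kl K' by simp
  have ea: "fst (P ! fst p) = fst (Es l ! fst p)" unfolding P_def using nth_mono[OF Pl] pc(1) unfolding N_def P_def by simp
  have eb: "fst (P ! snd p) = fst (Es l ! snd p)" unfolding P_def using nth_mono[OF Pl] pc(2) unfolding N_def P_def by simp
  have Km1: "m k - 1 = Suc k'" using K' unfolding K_def by simp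
  have EP: "Es (K - Suc 0) = P" unfolding P_def K' by simp
  show ?thesis unfolding ab
    using pc NK kK K2 iN Ki ea eb unfolding K_def[symmetric]
    by (simp add: fP_def EP N_def G_def[symmetric] p_def)
qed

lemma set_map_fst_nth: "set (map fst xs) = (\<lambda>a. fst (xs ! a)) ` {..<length xs}"
proof -
  have "set xs = (\<lambda>a. xs ! a) ` {..<length xs}" unfolding set_conv_nth by blast
  then show ?thesis by (simp add: image_image)
qed

lemma main:
  fixes n k1 :: nat
  assumes n_def: "n = Vector_Spaces.vector_space.dim smult (UNIV :: 'v set)"
    and gen: "generates smult mul one S"
    and k1: "k1 + 1 < n" "char_seq smult mul one S k1 = 1"
            "char_seq smult mul one S (k1 + 1) > 1"
  shows "\<exists>(e :: nat \<Rightarrow> 'v) (t1 :: nat \<Rightarrow> nat) (t2 :: nat \<Rightarrow> nat).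
     inj_on e {..<n} \<and>
     \<not> Modules.module.dependent smult (e ` {..<n}) \<and>
     Modules.module.span smult (e ` {..<n}) = UNIV \<and>
     (\<forall>k. k1 < k \<and> k < n \<longrightarrow> t1 k \<in> {1..n-1} \<and> t2 k \<in> {1..n-1}) \<and>
     (\<forall>i<n. word mul one S (e i) (char_seq smult mul one S i)) \<and>
     (\<forall>k. k1 < k \<and> k < n \<longrightarrow>
        char_seq smult mul one S (t1 k) + char_seq smult mul one S (t2 k)
          = char_seq smult mul one S k \<and> t1 k < k \<and> t2 k < k) \<and>
     (\<forall>h1 h2. k1 < h1 \<and> h1 < h2 \<and> h2 < n \<longrightarrow> t1 h1 < t1 h2 \<or> t2 h1 < t2 h2) \<and>
     (\<forall>k. k1 < k \<and> k < n \<longrightarrow> mul (e (t1 k)) (e (t2 k)) = e k) \<and>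
     Lspan smult mul one S 1 = Modules.module.span smult (e ` {..k1})"
proof -
  define l where "l = (LEAST k. L k = UNIV)"
  have Ll: "L l = UNIV" unfolding l_def using gen unfolding generates_def by (rule LeastI_ex)
  have nl: "n = length (Es l)" using n_def Ll D_all[of l] by (metis order_refl)
  have IL: "distinct (map fst (Es l))" "independent (set (map fst (Es l)))"
    "span (set (map fst (Es l))) = L l" "\<And>i. i < length (Es l) \<Longrightarrow> W (fst (Es l ! i)) (m i)"
  proof -
    have "Inv l" by (rule Inv_all)
    then show "distinct (map fst (Es l))" "independent (set (map fst (Es l)))"
      "span (set (map fst (Es l))) = L l" "\<And>i. i < length (Es l) \<Longrightarrow> W (fst (Es l ! i)) (m i)"
      unfolding Inv_def by blast+
  qed
  have d1: "length (Es 1) = k1 + 1"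
  proof -
    have "k1 < length (Es 1)" using m_le_iff'[of k1 l 1] k1 nl by simp
    moreover have "\<not> k1 + 1 < length (Es 1)" using m_le_iff'[of "k1+1" l 1] k1 nl by simp
    ultimately show ?thesis by simp
  qed
  have m0: "m 0 = 0" using m_zero[OF D_all] .
  define e where "e = (\<lambda>i. fst (Es l ! i))"
  define t1 where "t1 = (\<lambda>i. fst (snd (Es l ! i)))"
  define t2 where "t2 = (\<lambda>i. snd (snd (Es l ! i)))"
  have eimg: "e ` {..<n} = set (map fst (Es l))" unfolding e_def nl set_map_fst_nth ..
  have inj: "inj_on e {..<n}"
  proof -
    have "inj_on (nth (map fst (Es l))) {..<n}" using IL(1) nl by (intro inj_on_nth) auto
    moreover have "\<And>i. i \<in> {..<n} \<Longrightarrow> nth (map fst (Es l)) i = e i" unfolding e_def nl by simp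
    ultimately show ?thesis using inj_on_cong by blast
  qed
  have T: "m (t1 k) + m (t2 k) = m k \<and> t1 k < length (Es (m k - 1)) \<and> t2 k < length (Es (m k - 1))
    \<and> length (Es (m k - 1)) \<le> k \<and> k < length (Es (m k)) \<and> 0 < m (t1 k) \<and> 0 < m (t2 k) \<and> 2 \<le> m k
    \<and> e k = mul (e (t1 k)) (e (t2 k))
    \<and> snd (Es l ! k) = GL (m k) (Es (m k - 1)) ! (k - length (Es (m k - 1)))
    \<and> k - length (Es (m k - 1)) < length (GL (m k) (Es (m k - 1)))"
    if "k1 < k" "k < n" for k
  proof -
    have "length (Es 1) \<le> k" "k < length (Es l)" using that d1 nl by simp_all
    then show ?thesis unfolding e_def t1_def t2_def by (rule tag_props)
  qed
  have p1: "\<forall>k. k1 < k \<and> k < n \<longrightarrow> t1 k \<in> {1..n-1} \<and> t2 k \<in> {1..n-1}"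
  proof (intro allI impI)
    fix k assume "k1 < k \<and> k < n"
    then have Tk: "0 < m (t1 k)" "0 < m (t2 k)" "t1 k < k" "t2 k < k" "k < n" using T[of k] by auto
    have "t1 k \<noteq> 0"
    proof
      assume "t1 k = 0" then show False using Tk(1) m0 by simp
    qed
    moreover have "t2 k \<noteq> 0"
    proof
      assume "t2 k = 0" then show False using Tk(2) m0 by simp
    qed
    ultimately show "t1 k \<in> {1..n-1} \<and> t2 k \<in> {1..n-1}" using Tk by auto
  qed
  have p2: "\<forall>k. k1 < k \<and> k < n \<longrightarrow> m (t1 k) + m (t2 k) = m k \<and> t1 k < k \<and> t2 k < k"
  proof (intro allI impI)
    fix k assume "k1 < k \<and> k < n"
    then have "k1 < k" "k < n" by auto
    note Tk = T[OF this]
    then show "m (t1 k) + m (t2 k) = m k \<and> t1 k < k \<and> t2 k < k" by (meson less_le_trans)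
  qed
  have p3: "\<forall>k. k1 < k \<and> k < n \<longrightarrow> mul (e (t1 k)) (e (t2 k)) = e k"
  proof (intro allI impI)
    fix k assume "k1 < k \<and> k < n"
    then have "k1 < k" "k < n" by auto
    note Tk = T[OF this]
    then show "mul (e (t1 k)) (e (t2 k)) = e k" by (blast intro: sym)
  qed
  have p4: "t1 h1 < t1 h2 \<or> t2 h1 < t2 h2" if h: "k1 < h1" "h1 < h2" "h2 < n" for h1 h2
  proof -
    have T1: "m (t1 h1) + m (t2 h1) = m h1" "t1 h1 < h1" "t2 h1 < h1" using T[of h1] h by auto
    have T2: "m (t1 h2) + m (t2 h2) = m h2" using T[of h2] h by auto
    have mle: "m h1 \<le> m h2" using m_mono[of h1 h2 l] h nl by simp
    show ?thesis
    proof (cases "m h1 = m h2")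
      case True
      define K where "K = m h1"
      define G where "G = GL K (Es (K - 1))"
      define N where "N = length (Es (K - 1))"
      have A1: "snd (Es l ! h1) = G ! (h1 - N)" "h1 - N < length G" "N \<le> h1"
        using T[of h1] h unfolding G_def N_def K_def by auto
      have A2: "snd (Es l ! h2) = G ! (h2 - N)" "h2 - N < length G" "N \<le> h2"
        using T[of h2] h True unfolding G_def N_def K_def by auto
      have "sorted_wrt (<) G" unfolding G_def GL_def
        by (rule greedy_sorted) (rule strict_sorted_list_of_set)
      moreover have "h1 - N < h2 - N" using A1(3) h(2) by linarith
      ultimately have "G ! (h1 - N) < G ! (h2 - N)" using A2(2) by (rule sorted_wrt_nth_less)
      then have "snd (Es l ! h1) < snd (Es l ! h2)" using A1 A2 by simp
      then show ?thesis unfolding t1_def t2_def less_prod_def' by auto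
    next
      case False
      show ?thesis
      proof (rule ccontr)
        assume "\<not> ?thesis"
        then have "t1 h2 \<le> t1 h1" "t2 h2 \<le> t2 h1" by auto
        then have "m (t1 h2) \<le> m (t1 h1)" "m (t2 h2) \<le> m (t2 h1)"
          using m_mono[of _ _ l] T1 h nl by (meson less_trans)+
        then show False using T1 T2 mle False by simp
      qed
    qed
  qed
  have p5: "L 1 = span (e ` {..k1})"
  proof -
    have l1: "1 \<le> l"
    proof (rule ccontr)
      assume "\<not> 1 \<le> l" then have "l = 0" by simp
      then show False using nl k1 by simp
    qed
    have "e ` {..k1} = (\<lambda>a. fst (Es 1 ! a)) ` {..<length (Es 1)}"
      unfolding d1 e_def using nth_mono[OF l1] d1 by (intro image_cong) auto
    then have "e ` {..k1} = set (map fst (Es 1))" using set_map_fst_nth[of "Es 1"] by (rule trans[OF _ sym])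
    moreover have "Inv 1" by (rule Inv_all)
    then have "span (set (map fst (Es 1))) = L 1" unfolding Inv_def by blast
    ultimately show ?thesis by simp
  qed
  have q1: "\<not> dependent (e ` {..<n})" using IL(2) eimg by simp
  have q2: "span (e ` {..<n}) = UNIV" using IL(3) eimg Ll by simp
  have q3: "\<forall>i<n. W (e i) (m i)" using IL(4) nl unfolding e_def by simp
  have q4: "\<forall>h1 h2. k1 < h1 \<and> h1 < h2 \<and> h2 < n \<longrightarrow> t1 h1 < t1 h2 \<or> t2 h1 < t2 h2" using p4 by blast
  show ?thesis
    apply (rule exI[of _ e], rule exI[of _ t1], rule exI[of _ t2])
    using inj q1 q2 p1 q3 p2 q4 p3 p5 by (intro conjI)
qed
end

theorem proposition5p6:
  fixes smult :: "'k::field \<Rightarrow> 'v::ab_group_add \<Rightarrow> 'v"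
    and mul :: "'v \<Rightarrow> 'v \<Rightarrow> 'v" and one :: 'v
    and S :: "'v set" and n k1 :: nat
  assumes alg: "unital_algebra smult mul one"
    and fd: "fin_dim smult"
    and n_def: "n = Vector_Spaces.vector_space.dim smult (UNIV :: 'v set)"
    and n2: "n \<ge> 2"
    and finS: "finite S"
    and gen: "generates smult mul one S"
    and l2: "gen_length smult mul one S \<ge> 2"
    and k1: "k1 + 1 < n" "char_seq smult mul one S k1 = 1"
            "char_seq smult mul one S (k1 + 1) > 1"
  shows "\<exists>(e :: nat \<Rightarrow> 'v) (t1 :: nat \<Rightarrow> nat) (t2 :: nat \<Rightarrow> nat).
     inj_on e {..<n} \<and>
     \<not> Modules.module.dependent smult (e ` {..<n}) \<and>
     Modules.module.span smult (e ` {..<n}) = UNIV \<and>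
     (\<forall>k. k1 < k \<and> k < n \<longrightarrow> t1 k \<in> {1..n-1} \<and> t2 k \<in> {1..n-1}) \<and>
     (\<forall>i<n. word mul one S (e i) (char_seq smult mul one S i)) \<and>
     (\<forall>k. k1 < k \<and> k < n \<longrightarrow>
        char_seq smult mul one S (t1 k) + char_seq smult mul one S (t2 k)
          = char_seq smult mul one S k \<and> t1 k < k \<and> t2 k < k) \<and>
     (\<forall>h1 h2. k1 < h1 \<and> h1 < h2 \<and> h2 < n \<longrightarrow> t1 h1 < t1 h2 \<or> t2 h1 < t2 h2) \<and>
     (\<forall>k. k1 < k \<and> k < n \<longrightarrow> mul (e (t1 k)) (e (t2 k)) = e k) \<and>
     Lspan smult mul one S 1 = Modules.module.span smult (e ` {..k1})"
proof -
  have vs: "vector_space smult" and aL: "\<And>x y z. mul (x + y) z = mul x z + mul y z"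
    and aR: "\<And>x y z. mul x (y + z) = mul x y + mul x z"
    and sL: "\<And>a x y. mul (smult a x) y = smult a (mul x y)"
    and sR: "\<And>a x y. mul x (smult a y) = smult a (mul x y)"
    and oL: "\<And>x. mul one x = x" and oR: "\<And>x. mul x one = x"
    using alg unfolding unital_algebra_def by auto
  have onz: "one \<noteq> 0"
  proof
    assume o: "one = 0"
    have m0: "mul 0 y = 0" for y
    proof -
      have "mul (0 + 0) y = mul 0 y + mul 0 y" by (rule aL)
      then show ?thesis by simp
    qed
    have U: "(UNIV :: 'v set) = Modules.module.span smult {}"
    proof -
      have "x = 0" for x :: 'v using oL[of x] o m0 by simp
      then have "(UNIV :: 'v set) = {0}" by auto
      then show ?thesis using module.span_empty[OF vs[unfolded module_iff_vector_space[symmetric]]] by simp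
    qed
    have "Vector_Spaces.vector_space.dim smult (UNIV :: 'v set) = 0"
      unfolding U using vector_space.dim_span_eq_card_independent[OF vs, of "{}"]
        module.independent_empty[OF vs[unfolded module_iff_vector_space[symmetric]]] by simp
    then show False using n_def n2 by simp
  qed
  interpret A: alg5 smult mul one S
    by (rule alg5.intro[OF vs alg5_axioms.intro]) (use aL aR sL sR oL oR onz finS in auto)
  show ?thesis by (rule A.main[OF n_def gen k1])
qed

end
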